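(* Let $p, q$ be integers, let $z$ be a positive integer and let $u$ be an integer. Consider the congruence $$xz \equiv 2^q u + y \pmod{2^p}$$ in the integer unknowns $x, y$. Define $$x_0=\left\lceil\frac{2^q u}{z}\right\rceil,\quad y_0 = z x_0 - 2^q u;\qquad x_1=\left\lfloor\frac{2^q u}{z}\right\rfloor,\quad y_1 = z x_1 - 2^p;\qquad x_2=\left\lfloor\frac{2^q u}{z}\right\rfloor+1,\quad y_2 = z x_2 - 2^p.$$ Then every integer solution $(x,y)$ of the congruence is of the form $$\begin{bmatrix} x\\ y\end{bmatrix}=\begin{bmatrix} x_0+\alpha_1 x_1+\alpha_2 x_2\\ y_0+\alpha_1 y_1+\alpha_2 y_2\end{bmatrix}$$ for some integers $\alpha_1,\alpha_2\in\mathbb{Z}$.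
   Context: This arises from inverting $F(x)=\lfloor ((xz) \bmod 2^p)/2^q\rfloor$: if $F(x)=u$ then $xz \equiv 2^q u + y \pmod{2^p}$ for some integer $y$ with $0\le y<2^q$. Here $a \bmod n$ denotes the nonnegative remainder of $a$ upon division by $n$. *)

theory Defs
  imports Complex_Main "HOL-Number_Theory.Cong"
begin

end

theory Submission
  imports Defs
begin

theorem theorem1:
  fixes p q :: nat and z u x y :: int
  assumes "z > 0"
    and "[x * z = 2 ^ q * u + y] (mod 2 ^ p)"
  shows "let x0 = \<lceil>real_of_int (2 ^ q * u) / real_of_int z\<rceil>;
             y0 = z * x0 - 2 ^ q * u;
             x1 = \<lfloor>real_of_int (2 ^ q * u) / real_of_int z\<rfloor>;
             y1 = z * x1 - 2 ^ p;
             x2 = \<lfloor>real_of_int (2 ^ q * u) / real_of_int z\<rfloor> + 1;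
             y2 = z * x2 - 2 ^ p
         in \<exists>a1 a2 :: int. x = x0 + a1 * x1 + a2 * x2 \<and> y = y0 + a1 * y1 + a2 * y2"
proof -
  obtain k :: int where k: "x * z = 2 ^ q * u + y + 2 ^ p * k"
    proof -
    from assms(2) obtain k' :: int where "2 ^ q * u + y = x * z + 2 ^ p * k'"
      unfolding cong_iff_lin by blast
    then have "x * z = 2 ^ q * u + y + 2 ^ p * (- k')" by simp
    then show ?thesis using that by blast
  qed
  define C where "C = \<lceil>real_of_int (2 ^ q * u) / real_of_int z\<rceil>"
  define F where "F = \<lfloor>real_of_int (2 ^ q * u) / real_of_int z\<rfloor>"
  define a2 where "a2 = x - C - k * F"
  define a1 where "a1 = k - a2"
  have "x = C + a1 * F + a2 * (F + 1)"
    unfolding a1_def a2_def by (simp add: algebra_simps)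
  moreover have "y = (z * C - 2 ^ q * u) + a1 * (z * F - 2 ^ p) + a2 * (z * (F + 1) - 2 ^ p)"
  proof -
    have e: "(z * C - 2 ^ q * u) + a1 * (z * F - 2 ^ p) + a2 * (z * (F + 1) - 2 ^ p)
        = z * (C + a1 * F + a2 * (F + 1)) - 2 ^ q * u - 2 ^ p * (a1 + a2)"
      by (simp add: algebra_simps)
    have "a1 + a2 = k" unfolding a1_def by simp
    with e calculation k show ?thesis by (simp add: mult.commute)
  qed
  ultimately show ?thesis unfolding Let_def C_def[symmetric] F_def[symmetric] by blast
qed

end
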